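(* Let $(\Gamma,\mu)$ be a weighted graph such that $\mu_{xy}\ge1$ whenever $x\sim y$. Let $x\in\Gamma$, $r>0$ and $A>0$ satisfy $V(x,r)\ge r^2/A$, and let $t=r^3$. Then $$q_{2t}(x,x)\le\frac{2(A\vee1)}{r^2}=\frac{2(A\vee1)}{t^{2/3}}.$$
   Context: A weighted graph $(\Gamma,\mu)$ is an infinite, connected, locally finite graph $\Gamma$ with a symmetric function $\mu_{xy}\ge0$ on $\Gamma\times\Gamma$ such that $\mu_{xy}>0$ iff $x\sim y$ (i.e. $x,y$ adjacent). Set $\mu_x=\sum_y\mu_{xy}$, $\mu(A)=\sum_{x\in A}\mu_x$; $d$ is the graph distance, $B(x,r)=\{y:d(x,y)\le r\}$, $V(x,r)=\mu(B(x,r))$. $Y$ is the continuous-time random walk with generator $\mathcal Lf(x)=\mu_x^{-1}\sum_y\mu_{xy}(f(y)-f(x))$ and $q_t(x,y)=P^x(Y_t=y)/\mu_y$. *)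

theory Defs
  imports "HOL-Analysis.Analysis"
begin

definition adj :: "('a \<Rightarrow> 'a \<Rightarrow> real) \<Rightarrow> ('a \<times> 'a) set" where
  "adj \<mu> = {(x, y). \<mu> x y > 0}"

definition nbrs :: "('a \<Rightarrow> 'a \<Rightarrow> real) \<Rightarrow> 'a \<Rightarrow> 'a set" where
  "nbrs \<mu> x = {y. \<mu> x y > 0}"

definition weighted_graph :: "('a \<Rightarrow> 'a \<Rightarrow> real) \<Rightarrow> bool" where
  "weighted_graph \<mu> \<longleftrightarrow>
     infinite (UNIV :: 'a set)
   \<and> (\<forall>x y. \<mu> x y = \<mu> y x)
   \<and> (\<forall>x y. \<mu> x y \<ge> 0)
   \<and> (\<forall>x. finite (nbrs \<mu> x))
   \<and> (\<forall>x y. (x, y) \<in> (adj \<mu>)\<^sup>*)"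

definition vweight :: "('a \<Rightarrow> 'a \<Rightarrow> real) \<Rightarrow> 'a \<Rightarrow> real" where
  "vweight \<mu> x = (\<Sum>y\<in>nbrs \<mu> x. \<mu> x y)"

definition gdist :: "('a \<Rightarrow> 'a \<Rightarrow> real) \<Rightarrow> 'a \<Rightarrow> 'a \<Rightarrow> nat" where
  "gdist \<mu> x y = (LEAST n. (x, y) \<in> adj \<mu> ^^ n)"

definition ball_g :: "('a \<Rightarrow> 'a \<Rightarrow> real) \<Rightarrow> 'a \<Rightarrow> real \<Rightarrow> 'a set" where
  "ball_g \<mu> x r = {y. real (gdist \<mu> x y) \<le> r}"

definition vol :: "('a \<Rightarrow> 'a \<Rightarrow> real) \<Rightarrow> 'a \<Rightarrow> real \<Rightarrow> real" where
  "vol \<mu> x r = (\<Sum>y\<in>ball_g \<mu> x r. vweight \<mu> y)"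

fun pstep :: "('a \<Rightarrow> 'a \<Rightarrow> real) \<Rightarrow> nat \<Rightarrow> 'a \<Rightarrow> 'a \<Rightarrow> real" where
  "pstep \<mu> 0 x y = (if x = y then 1 else 0)"
| "pstep \<mu> (Suc n) x y = (\<Sum>z\<in>nbrs \<mu> x. \<mu> x z / vweight \<mu> x * pstep \<mu> n z y)"

text \<open>Continuous-time random walk with generator
  L f(x) = mu_x^-1 sum_y mu_xy (f y - f x): the jump chain run with
  rate-1 exponential holding times, so
  P^x(Y_t = y) = sum_n e^-t t^n / n! P^n(x,y).\<close>
definition trans_prob :: "('a \<Rightarrow> 'a \<Rightarrow> real) \<Rightarrow> real \<Rightarrow> 'a \<Rightarrow> 'a \<Rightarrow> real" where
  "trans_prob \<mu> t x y = (\<Sum>n. exp (- t) * t ^ n / fact n * pstep \<mu> n x y)"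

definition heat_kernel :: "('a \<Rightarrow> 'a \<Rightarrow> real) \<Rightarrow> real \<Rightarrow> 'a \<Rightarrow> 'a \<Rightarrow> real" where
  "heat_kernel \<mu> t x y = trans_prob \<mu> t x y / vweight \<mu> y"

end

theory Submission
  imports Defs
begin

fun Kset :: "('a \<Rightarrow> 'a \<Rightarrow> real) \<Rightarrow> nat \<Rightarrow> 'a \<Rightarrow> 'a set" where
  "Kset mu 0 x = {x}"
| "Kset mu (Suc n) x = insert x (\<Union>z\<in>nbrs mu x. Kset mu n z)"

locale WG =
  fixes mu :: "'a \<Rightarrow> 'a \<Rightarrow> real"
  assumes wg: "weighted_graph mu"
    and ge1: "\<And>y z. (y, z) \<in> adj mu \<Longrightarrow> mu y z \<ge> 1"
begin

abbreviation "m \<equiv> vweight mu"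
abbreviation "K \<equiv> Kset mu"

lemma sym: "mu x y = mu y x" using wg unfolding weighted_graph_def by blast
lemma nonneg: "mu x y \<ge> 0" using wg unfolding weighted_graph_def by blast
lemma fin_nbrs: "finite (nbrs mu x)" using wg unfolding weighted_graph_def by blast
lemma conn: "(x, y) \<in> (adj mu)\<^sup>*" using wg unfolding weighted_graph_def by blast
lemma infU: "infinite (UNIV :: 'a set)" using wg unfolding weighted_graph_def by blast
lemma nbrs_iff: "z \<in> nbrs mu y \<longleftrightarrow> (y, z) \<in> adj mu" by (simp add: nbrs_def adj_def)
lemma zero_out: "z \<notin> nbrs mu y \<Longrightarrow> mu y z = 0"
  using nonneg[of y z] by (simp add: nbrs_def)

lemma m_ge1: "m y \<ge> 1"
proof -
  obtain z where "z \<noteq> y" using infU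
    by (metis UNIV_I finite.emptyI finite_insert insertCI subsetI finite_subset)
  have "(y, z) \<in> (adj mu)\<^sup>*" by (rule conn)
  then obtain w where w: "(y, w) \<in> adj mu"
    using \<open>z \<noteq> y\<close> by (metis converse_rtranclE)
  hence wn: "w \<in> nbrs mu y" by (simp add: nbrs_iff)
  have "1 \<le> mu y w" using ge1 w by blast
  also have "\<dots> \<le> (\<Sum>v\<in>nbrs mu y. mu y v)"
    by (rule member_le_sum[OF wn]) (auto simp: nonneg fin_nbrs)
  finally show ?thesis by (simp add: vweight_def)
qed

lemma m_pos: "m y > 0" using m_ge1[of y] by linarith

lemma sum_ext_nbrs:
  assumes "finite T" "nbrs mu y \<subseteq> T"
  shows "(\<Sum>z\<in>T. mu y z * f z) = (\<Sum>z\<in>nbrs mu y. mu y z * f z)"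
  by (rule sum.mono_neutral_right[OF assms(1,2)]) (auto simp: zero_out)

lemma rowsum:
  assumes "finite T" "nbrs mu y \<subseteq> T"
  shows "(\<Sum>z\<in>T. mu y z) = m y"
  using sum_ext_nbrs[OF assms, of "\<lambda>_. 1"] by (simp add: vweight_def)

lemma K_fin: "finite (K n x)"
  by (induction n arbitrary: x) (auto simp: fin_nbrs)

lemma K_self: "x \<in> K n x"
  by (cases n) auto

lemma K_Suc: "K n x \<subseteq> K (Suc n) x"
proof (induction n arbitrary: x)
  case 0 then show ?case by auto
next
  case (Suc n) then show ?case by (auto simp del: Kset.simps(2)) (auto)
qed

lemma K_mono: "n \<le> k \<Longrightarrow> K n x \<subseteq> K k x"
  by (induction k rule: dec_induct) (use K_Suc in auto)

lemma K_nbr: "z \<in> nbrs mu x \<Longrightarrow> K n z \<subseteq> K (Suc n) x"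
  by auto

lemma pstep_supp: "pstep mu n x y \<noteq> 0 \<Longrightarrow> y \<in> K n x"
proof (induction n arbitrary: x)
  case 0 then show ?case by (auto split: if_splits)
next
  case (Suc n)
  then obtain z where "z \<in> nbrs mu x" "mu x z / m x * pstep mu n z y \<noteq> 0"
    by (auto elim: sum.not_neutral_contains_not_neutral)
  then show ?case using Suc.IH by fastforce
qed

lemma pstep_nonneg: "pstep mu n x y \<ge> 0"
  by (induction n arbitrary: x) (auto intro!: sum_nonneg simp: nonneg m_pos less_imp_le)

lemma sum_pstep:
  assumes "finite S" "K n x \<subseteq> S"
  shows "(\<Sum>y\<in>S. pstep mu n x y) = 1"
  using assms
proof (induction n arbitrary: x S)
  case 0
  then show ?case by simp
next
  case (Suc n)
  have "(\<Sum>y\<in>S. pstep mu (Suc n) x y)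
      = (\<Sum>z\<in>nbrs mu x. mu x z / m x * (\<Sum>y\<in>S. pstep mu n z y))"
    by (simp add: sum_distrib_left sum.swap[of _ S])
  also have "\<dots> = (\<Sum>z\<in>nbrs mu x. mu x z / m x)"
    by (rule sum.cong[OF refl]) (use Suc in auto)
  also have "\<dots> = 1" using m_pos[of x]
    by (simp add: sum_divide_distrib[symmetric] vweight_def)
  finally show ?case .
qed

lemma pstep_le1: "pstep mu n x y \<le> 1"
proof -
  have "pstep mu n x y \<le> (\<Sum>v\<in>insert y (K n x). pstep mu n x v)"
    by (rule member_le_sum) (auto simp: pstep_nonneg K_fin)
  also have "\<dots> = 1" by (rule sum_pstep) (auto simp: K_fin)
  finally show ?thesis .
qed

lemma CK:
  assumes "finite S" "K n x \<subseteq> S"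
  shows "pstep mu (n + k) x y = (\<Sum>z\<in>S. pstep mu n x z * pstep mu k z y)"
  using assms
proof (induction n arbitrary: x S)
  case 0
  have "(\<Sum>z\<in>S. pstep mu 0 x z * pstep mu k z y) = (\<Sum>z\<in>S. if x = z then pstep mu k z y else 0)"
    by (rule sum.cong) auto
  then show ?case using 0 by simp
next
  case (Suc n)
  have "pstep mu (Suc n + k) x y = (\<Sum>w\<in>nbrs mu x. mu x w / m x * pstep mu (n + k) w y)"
    by simp
  also have "\<dots> = (\<Sum>w\<in>nbrs mu x. mu x w / m x * (\<Sum>z\<in>S. pstep mu n w z * pstep mu k z y))"
    by (rule sum.cong[OF refl]) (use Suc in auto)
  also have "\<dots> = (\<Sum>z\<in>S. pstep mu (Suc n) x z * pstep mu k z y)"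
    by (simp add: sum_distrib_left sum_distrib_right sum.swap[of _ S] mult.assoc)
  finally show ?case .
qed

lemma pstep_one: "pstep mu (Suc 0) z y = mu z y / m z"
proof -
  have "pstep mu (Suc 0) z y = (\<Sum>w\<in>nbrs mu z. mu z w / m z * (if w = y then 1 else 0))"
    by simp
  also have "\<dots> = (if y \<in> nbrs mu z then mu z y / m z else 0)"
    by (simp add: if_distrib fin_nbrs cong: if_cong)
  also have "\<dots> = mu z y / m z" by (auto simp: zero_out)
  finally show ?thesis .
qed

lemma rev: "m x * pstep mu n x y = m y * pstep mu n y x"
proof (induction n arbitrary: x y)
  case 0 then show ?case by auto
next
  case (Suc n)
  define S where "S = K n x \<union> nbrs mu y"
  have fS: "finite S" by (simp add: S_def K_fin fin_nbrs)
  have "pstep mu (Suc n) x y = pstep mu (n + Suc 0) x y" by simp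
  also have "\<dots> = (\<Sum>z\<in>S. pstep mu n x z * (mu z y / m z))"
    by (subst CK[OF fS]) (auto simp: S_def pstep_one simp del: pstep.simps(2))
  finally have "m x * pstep mu (Suc n) x y = (\<Sum>z\<in>S. (m x * pstep mu n x z) * (mu z y / m z))"
    by (simp add: sum_distrib_left mult.assoc)
  also have "\<dots> = (\<Sum>z\<in>S. mu y z * pstep mu n z x)"
  proof (rule sum.cong[OF refl])
    fix z assume "z \<in> S"
    have "m z > 0" by (rule m_pos)
    then show "(m x * pstep mu n x z) * (mu z y / m z) = mu y z * pstep mu n z x"
      using Suc.IH[of x z] by (simp add: sym[of y] field_simps)
  qed
  also have "\<dots> = (\<Sum>z\<in>nbrs mu y. mu y z * pstep mu n z x)"
    by (rule sum_ext_nbrs[OF fS]) (auto simp: S_def)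
  also have "\<dots> = m y * pstep mu (Suc n) y x"
    using m_pos[of y] by (simp add: sum_distrib_left)
  finally show ?case .
qed

end

definition wp :: "real \<Rightarrow> nat \<Rightarrow> real" where
  "wp u n = exp (- u) * u ^ n / fact n"

definition Ser :: "(nat \<Rightarrow> real) \<Rightarrow> real \<Rightarrow> real" where
  "Ser d u = (\<Sum>n. wp u n * d n)"

lemma wp_nonneg: "u \<ge> 0 \<Longrightarrow> wp u n \<ge> 0"
  by (simp add: wp_def)

lemma wp_sums: "(\<lambda>n. wp u n) sums 1"
proof -
  have "(\<lambda>n. exp (- u) * (u ^ n /\<^sub>R fact n)) sums (exp (- u) * exp u)"
    by (rule sums_mult[OF exp_converges])
  then show ?thesis by (simp add: wp_def exp_minus field_simps)
qed

lemma summable_pow: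
  fixes d :: "nat \<Rightarrow> real" and y B :: real
  assumes "\<And>n. \<bar>d n\<bar> \<le> B"
  shows "summable (\<lambda>n. d n / fact n * y ^ n)"
proof (rule summable_comparison_test'[where g="\<lambda>n. B * (inverse (fact n) * \<bar>y\<bar> ^ n)" and N=0])
  show "summable (\<lambda>n. B * (inverse (fact n) * \<bar>y\<bar> ^ n))"
    by (rule summable_mult[OF summable_exp])
  fix n :: nat
  have "\<bar>d n\<bar> * (inverse (fact n) * \<bar>y\<bar> ^ n) \<le> B * (inverse (fact n) * \<bar>y\<bar> ^ n)"
    by (rule mult_right_mono[OF assms]) simp
  then show "norm (d n / fact n * y ^ n) \<le> B * (inverse (fact n) * \<bar>y\<bar> ^ n)"
    by (simp add: abs_mult power_abs divide_inverse mult_ac)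
qed

lemma Ser_eq:
  assumes "\<And>n. \<bar>d n\<bar> \<le> B"
  shows "Ser d u = exp (- u) * (\<Sum>n. d n / fact n * u ^ n)"
proof -
  have "Ser d u = (\<Sum>n. exp (- u) * (d n / fact n * u ^ n))"
    unfolding Ser_def wp_def by (rule arg_cong[where f=suminf]) (auto simp: field_simps)
  also have "\<dots> = exp (- u) * (\<Sum>n. d n / fact n * u ^ n)"
    by (rule suminf_mult[OF summable_pow[OF assms]])
  finally show ?thesis .
qed

lemma summable_wp:
  assumes "\<And>n. \<bar>d n\<bar> \<le> B"
  shows "summable (\<lambda>n. wp u n * d n)"
proof -
  have "summable (\<lambda>n. exp (- u) * (d n / fact n * u ^ n))"
    by (rule summable_mult[OF summable_pow[OF assms]])
  then show ?thesis by (simp add: wp_def field_simps)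
qed

lemma Ser_deriv:
  assumes "\<And>n. \<bar>d n\<bar> \<le> B"
  shows "(Ser d has_real_derivative Ser (\<lambda>n. d (Suc n) - d n) u) (at u)"
proof -
  define c where "c n = d n / fact n" for n
  have sc: "\<And>y. summable (\<lambda>n. c n * y ^ n)" unfolding c_def by (rule summable_pow[OF assms])
  have dc: "diffs c n = d (Suc n) / fact n" for n
    by (simp add: diffs_def c_def field_simps del: of_nat_Suc)
  have B1: "\<bar>d (Suc n)\<bar> \<le> B" for n by (rule assms)
  have sd: "\<And>y. summable (\<lambda>n. diffs c n * y ^ n)"
    unfolding dc by (rule summable_pow[OF B1])
  have G: "((\<lambda>x. \<Sum>n. c n * x ^ n) has_real_derivative (\<Sum>n. diffs c n * u ^ n)) (at u)"
    by (rule termdiffs_strong_converges_everywhere[OF sc])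
  have fe: "Ser d = (\<lambda>x. exp (- x) * (\<Sum>n. c n * x ^ n))"
    by (rule ext) (simp add: Ser_eq[OF assms] c_def)
  have "((\<lambda>x. exp (- x) * (\<Sum>n. c n * x ^ n)) has_real_derivative
      (- exp (- u) * (\<Sum>n. c n * u ^ n) + exp (- u) * (\<Sum>n. diffs c n * u ^ n))) (at u)"
    by (auto intro!: derivative_eq_intros G)
  moreover have "- exp (- u) * (\<Sum>n. c n * u ^ n) + exp (- u) * (\<Sum>n. diffs c n * u ^ n)
      = Ser (\<lambda>n. d (Suc n) - d n) u"
  proof -
    have Bd: "\<bar>d (Suc n) - d n\<bar> \<le> 2 * B" for n
      using assms[of n] assms[of "Suc n"] by linarith
    have "(\<Sum>n. diffs c n * u ^ n) - (\<Sum>n. c n * u ^ n) = (\<Sum>n. (d (Suc n) - d n) / fact n * u ^ n)"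
      by (subst suminf_diff[OF sd sc]) (simp add: dc c_def field_simps)
    then show ?thesis
      by (simp add: Ser_eq[OF Bd] algebra_simps)
  qed
  ultimately show ?thesis by (simp add: fe)
qed

lemma wp_binom: "(\<Sum>i\<le>n. wp s i * wp s (n - i)) = wp (2 * s) n"
proof -
  have e: "(s + s) ^ n /\<^sub>R fact n = (\<Sum>i\<le>n. (s ^ i /\<^sub>R fact i) * (s ^ (n - i) /\<^sub>R fact (n - i)))"
    by (rule exp_series_add_commuting) simp
  have "(\<Sum>i\<le>n. wp s i * wp s (n - i))
      = exp (- s) * exp (- s) * (\<Sum>i\<le>n. (s ^ i /\<^sub>R fact i) * (s ^ (n - i) /\<^sub>R fact (n - i)))"
    by (simp add: wp_def sum_distrib_left field_simps)
  also have "\<dots> = exp (- s) * exp (- s) * ((s + s) ^ n /\<^sub>R fact n)" by (simp only: e)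
  also have "\<dots> = wp (2 * s) n"
    by (simp add: wp_def exp_add[symmetric] field_simps mult_2)
  finally show ?thesis .
qed

lemma tri_sum:
  "(\<Sum>(i,j)\<in>{(i,j). i+j<M}. wp s i * wp s j * d (i+j)) = (\<Sum>n<M. wp (2 * s) n * d n)"
proof -
  have "(\<Sum>(i,j)\<in>{(i,j). i+j<M}. wp s i * wp s j * d (i+j))
      = (\<Sum>k<M. \<Sum>i\<le>k. wp s i * wp s (k - i) * d (i + (k - i)))"
    by (rule sum.triangle_reindex)
  also have "\<dots> = (\<Sum>k<M. (\<Sum>i\<le>k. wp s i * wp s (k - i)) * d k)"
    by (rule sum.cong[OF refl]) (auto simp: sum_distrib_right intro!: sum.cong)
  also have "\<dots> = (\<Sum>n<M. wp (2 * s) n * d n)" by (simp add: wp_binom)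
  finally show ?thesis .
qed

lemma sq_limit:
  assumes B: "\<And>n. \<bar>d n\<bar> \<le> B" and s: "s \<ge> 0"
  shows "(\<lambda>M. \<Sum>i<M. \<Sum>j<M. wp s i * wp s j * d (i+j)) \<longlonglongrightarrow> Ser d (2 * s)"
proof -
  define f where "f = (\<lambda>(i,j). wp s i * wp s j * d (i+j))"
  define g where "g = (\<lambda>(i::nat,j::nat). wp s i * wp s j)"
  define P where "P M = {..<M}\<times>{..<M::nat}" for M
  define Q where "Q M = {(i,j). i+j<(M::nat)}" for M
  have QP: "Q M \<subseteq> P M" for M by (auto simp: P_def Q_def)
  have fP: "finite (P M)" for M by (simp add: P_def)
  have Sq: "(\<Sum>i<M. \<Sum>j<M. wp s i * wp s j * d (i+j)) = sum f (P M)" for M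
    by (simp add: P_def f_def sum.cartesian_product)
  have Tr: "sum f (Q M) = (\<Sum>n<M. wp (2 * s) n * d n)" for M
    unfolding f_def Q_def by (rule tri_sum)
  have TrW: "sum g (Q M) = (\<Sum>n<M. wp (2 * s) n)" for M
    using tri_sum[of s "\<lambda>_. 1" M] unfolding g_def Q_def by simp
  have SqW: "sum g (P M) = (\<Sum>i<M. wp s i)^2" for M
    by (simp add: g_def P_def power2_eq_square sum_product sum.cartesian_product)
  have B0: "B \<ge> 0" using B[of 0] by linarith
  have bound: "norm (sum f (P M) - sum f (Q M)) \<le> B * (sum g (P M) - sum g (Q M))" for M
  proof -
    have "sum f (P M) - sum f (Q M) = sum f (P M - Q M)"
      by (rule sum_diff[OF fP QP, symmetric])
    also have "norm \<dots> \<le> (\<Sum>p\<in>P M - Q M. \<bar>f p\<bar>)"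
      by (simp add: sum_abs)
    also have "\<dots> \<le> (\<Sum>p\<in>P M - Q M. B * g p)"
    proof (rule sum_mono)
      fix p assume "p \<in> P M - Q M"
      obtain i j where p: "p = (i,j)" by fastforce
      have "\<bar>f p\<bar> = (wp s i * wp s j) * \<bar>d (i+j)\<bar>"
        using wp_nonneg[OF s] by (simp add: p f_def abs_mult)
      also have "\<dots> \<le> (wp s i * wp s j) * B"
        by (rule mult_left_mono[OF B]) (simp add: wp_nonneg[OF s])
      finally show "\<bar>f p\<bar> \<le> B * g p" by (simp add: p g_def mult_ac)
    qed
    also have "\<dots> = B * (sum g (P M) - sum g (Q M))"
      by (simp add: sum_distrib_left[symmetric] sum_diff[OF fP QP])
    finally show ?thesis .
  qed
  have l1: "(\<lambda>M. \<Sum>n<M. wp (2 * s) n * d n) \<longlonglongrightarrow> Ser d (2 * s)"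
    unfolding Ser_def by (rule summable_LIMSEQ[OF summable_wp[OF B]])
  have w1: "(\<lambda>M. \<Sum>n<M. wp u n) \<longlonglongrightarrow> 1" for u
    using wp_sums[of u] by (simp add: sums_def)
  have l2: "(\<lambda>M. B * (sum g (P M) - sum g (Q M))) \<longlonglongrightarrow> B * (1^2 - 1)"
    unfolding SqW TrW by (intro tendsto_intros w1)
  have l3: "(\<lambda>M. sum f (P M) - sum f (Q M)) \<longlonglongrightarrow> 0"
    by (rule Lim_null_comparison[OF always_eventually[OF allI[OF bound]]]) (use l2 in simp)
  have l1': "(\<lambda>M. sum f (Q M)) \<longlonglongrightarrow> Ser d (2 * s)" using l1 by (simp add: Tr)
  have "(\<lambda>M. sum f (Q M) + (sum f (P M) - sum f (Q M))) \<longlonglongrightarrow> Ser d (2 * s) + 0"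
    by (intro tendsto_intros l1' l3)
  then show ?thesis by (simp add: Sq)
qed

lemma Ser_neg:
  assumes "\<And>n. \<bar>d n\<bar> \<le> B"
  shows "Ser (\<lambda>n. - d n) u = - Ser d u"
  unfolding Ser_def using suminf_minus[OF summable_wp[OF assms, of u]] by simp

lemma key_ineq:
  assumes B: "\<And>n. \<bar>a n\<bar> \<le> B"
    and cpos: "\<And>u. u > 0 \<Longrightarrow> Ser (\<lambda>n. (a n - a (Suc n)) - (a (Suc n) - a (Suc (Suc n)))) u \<ge> 0"
    and apos: "\<And>u. u \<ge> 0 \<Longrightarrow> Ser a u \<ge> 0"
    and s: "s > 0"
  shows "s * Ser (\<lambda>n. a n - a (Suc n)) (2 * s) \<le> Ser a s"
proof -
  define b where "b n = a n - a (Suc n)" for n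
  define c where "c n = b n - b (Suc n)" for n
  have Bb: "\<bar>b n\<bar> \<le> 2*B" for n using B[of n] B[of "Suc n"] unfolding b_def by linarith
  have Bc: "\<bar>c n\<bar> \<le> 4*B" for n using Bb[of n] Bb[of "Suc n"] unfolding c_def by linarith
  have da: "DERIV (Ser a) u :> - Ser b u" for u
  proof -
    have "(\<lambda>n. a (Suc n) - a n) = (\<lambda>n. - b n)" by (auto simp: b_def)
    then show ?thesis using Ser_deriv[where d=a and B=B and u=u, OF B] Ser_neg[where d=b and B="2*B" and u=u, OF Bb] by simp
  qed
  have db: "DERIV (Ser b) u :> - Ser c u" for u
  proof -
    have "(\<lambda>n. b (Suc n) - b n) = (\<lambda>n. - c n)" by (auto simp: c_def)
    then show ?thesis using Ser_deriv[where d=b and B="2*B" and u=u, OF Bb] Ser_neg[where d=c and B="4*B" and u=u, OF Bc] by simp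
  qed
  obtain xi where xi: "s < xi" "xi < 2 * s" "Ser a (2 * s) - Ser a s = (2 * s - s) * (- Ser b xi)"
    using MVT2[of s "2 * s" "Ser a" "\<lambda>u. - Ser b u"] da s by auto
  obtain ze where ze: "xi < ze" "ze < 2 * s" "Ser b (2 * s) - Ser b xi = (2 * s - xi) * (- Ser c ze)"
    using MVT2[of xi "2 * s" "Ser b" "\<lambda>u. - Ser c u"] db xi by auto
  have ceq: "c = (\<lambda>n. (a n - a (Suc n)) - (a (Suc n) - a (Suc (Suc n))))"
    by (auto simp: c_def b_def)
  have "Ser c ze \<ge> 0" using cpos[of ze] ze xi s unfolding ceq by simp
  hence "(2 * s - xi) * Ser c ze \<ge> 0" using ze by simp
  hence "Ser b (2 * s) \<le> Ser b xi" using ze(3) by linarith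
  hence "s * Ser b (2 * s) \<le> s * Ser b xi" using s by simp
  also have "\<dots> = Ser a s - Ser a (2 * s)" using xi by simp
  also have "\<dots> \<le> Ser a s" using apos[of "2 * s"] s by simp
  finally show ?thesis unfolding b_def[abs_def] .
qed


lemma sq_expand: "(\<Sum>i<M. c i)^2 = (\<Sum>i<M. \<Sum>j<M. c i * (c j :: real))"
  by (simp add: power2_eq_square sum_product)

lemma swap3: "(\<Sum>y\<in>A. \<Sum>i<M. \<Sum>j<N. F y i j) = (\<Sum>i<M. \<Sum>j<N. \<Sum>y\<in>A. (F y i j :: real))"
  by (subst sum.swap) (simp add: sum.swap[of _ A])

context WG
begin

definition gg :: "'a \<Rightarrow> nat \<Rightarrow> 'a \<Rightarrow> real" where
  "gg x n y = pstep mu n x y / m y"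
definition aa :: "'a \<Rightarrow> nat \<Rightarrow> real" where
  "aa x n = pstep mu n x x / m x"

lemma gg_rev: "gg x n y = pstep mu n y x / m x"
  using rev[of x n y] m_pos[of x] m_pos[of y] by (simp add: gg_def field_simps)

lemma gg_supp: "gg x n y \<noteq> 0 \<Longrightarrow> y \<in> K n x"
  using pstep_supp by (auto simp: gg_def)

lemma gg_x: "gg x n x = aa x n" by (simp add: gg_def aa_def)

lemma aa_bd: "\<bar>aa x n\<bar> \<le> 1"
proof -
  have "pstep mu n x x / m x \<le> 1 / 1"
    by (rule frac_le) (auto simp: pstep_le1 m_ge1)
  then show ?thesis using pstep_nonneg[of n x x] m_pos[of x] by (simp add: aa_def)
qed

lemma aa_nonneg: "aa x n \<ge> 0"
  using pstep_nonneg[of n x x] m_pos[of x] by (simp add: aa_def)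

lemma gg_bd: "\<bar>gg x n y\<bar> \<le> 1"
proof -
  have "pstep mu n x y / m y \<le> 1 / 1"
    by (rule frac_le) (auto simp: pstep_le1 m_ge1)
  then show ?thesis using pstep_nonneg[of n x y] m_pos[of y] by (simp add: gg_def)
qed

lemma inner:
  assumes "finite U" "K i x \<subseteq> U"
  shows "(\<Sum>y\<in>U. m y * (gg x i y * gg x j y)) = aa x (i + j)"
proof -
  have "(\<Sum>y\<in>U. m y * (gg x i y * gg x j y)) = (\<Sum>y\<in>U. pstep mu i x y * pstep mu j y x) / m x"
    unfolding sum_divide_distrib
  proof (rule sum.cong[OF refl])
    fix y assume "y \<in> U"
    show "m y * (gg x i y * gg x j y) = pstep mu i x y * pstep mu j y x / m x"
      using m_pos[of y] by (simp add: gg_def[of x i] gg_rev[of x j])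
  qed
  also have "\<dots> = aa x (i + j)"
    by (simp add: aa_def CK[OF assms])
  finally show ?thesis .
qed

lemma Pg:
  assumes "finite T" "nbrs mu y \<subseteq> T"
  shows "(\<Sum>z\<in>T. mu y z * gg x j z) = m y * gg x (Suc j) y"
proof -
  have "(\<Sum>z\<in>T. mu y z * gg x j z) = (\<Sum>z\<in>nbrs mu y. mu y z * gg x j z)"
    by (rule sum_ext_nbrs[OF assms])
  also have "\<dots> = (\<Sum>z\<in>nbrs mu y. mu y z * pstep mu j z x) / m x"
    by (simp add: gg_rev sum_divide_distrib)
  also have "\<dots> = m y * gg x (Suc j) y"
    using m_pos[of y] by (simp add: gg_rev sum_divide_distrib sum_distrib_left)
  finally show ?thesis .
qed

definition Dform :: "'a set \<Rightarrow> ('a \<Rightarrow> real) \<Rightarrow> real" where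
  "Dform T f = (\<Sum>y\<in>T. \<Sum>z\<in>T. mu y z * (f y - f z)^2) / 2"

lemma Dbil:
  assumes T: "finite T" "K M x \<subseteq> T" "\<And>y. y \<in> K M x \<Longrightarrow> nbrs mu y \<subseteq> T" and i: "i \<le> M"
  shows "(\<Sum>y\<in>T. \<Sum>z\<in>T. mu y z * ((gg x i y - gg x i z) * (gg x j y - gg x j z)))
       = 2 * (aa x (i + j) - aa x (Suc (i + j)))"
proof -
  define g where "g = gg x i"
  define h where "h = gg x j"
  have KiT: "K i x \<subseteq> T" using K_mono[OF i] T(2) by blast
  have loc: "g y * (\<Sum>z\<in>T. mu y z * F z) = g y * (\<Sum>z\<in>nbrs mu y. mu y z * F z)" for y F
  proof (cases "g y = 0")
    case False
    then have "y \<in> K M x" using gg_supp K_mono[OF i] unfolding g_def by blast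
    then show ?thesis using sum_ext_nbrs[OF T(1) T(3)] by simp
  qed simp
  have TA: "(\<Sum>y\<in>T. \<Sum>z\<in>T. mu y z * (g y * h y)) = aa x (i + j)"
  proof -
    have "(\<Sum>y\<in>T. \<Sum>z\<in>T. mu y z * (g y * h y)) = (\<Sum>y\<in>T. h y * (g y * (\<Sum>z\<in>T. mu y z * 1)))"
      by (simp add: sum_distrib_left sum_distrib_right mult_ac)
    also have "\<dots> = (\<Sum>y\<in>T. h y * (g y * m y))"
      by (simp only: loc) (simp add: vweight_def)
    also have "\<dots> = aa x (i + j)"
      using inner[OF T(1) KiT, of j] by (simp add: g_def h_def mult_ac)
    finally show ?thesis .
  qed
  have TB: "(\<Sum>y\<in>T. \<Sum>z\<in>T. mu y z * (g y * h z)) = aa x (Suc (i + j))"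
  proof -
    have "(\<Sum>y\<in>T. \<Sum>z\<in>T. mu y z * (g y * h z)) = (\<Sum>y\<in>T. g y * (\<Sum>z\<in>T. mu y z * h z))"
      by (simp add: sum_distrib_left mult_ac)
    also have "\<dots> = (\<Sum>y\<in>T. g y * (m y * gg x (Suc j) y))"
    proof (rule sum.cong[OF refl])
      fix y assume "y \<in> T"
      show "g y * (\<Sum>z\<in>T. mu y z * h z) = g y * (m y * gg x (Suc j) y)"
      proof (cases "g y = 0")
        case False
        then have "y \<in> K M x" using gg_supp K_mono[OF i] unfolding g_def by blast
        then show ?thesis using Pg[OF T(1) T(3)] by (simp add: h_def)
      qed simp
    qed
    also have "\<dots> = aa x (Suc (i + j))"
      using inner[OF T(1) KiT, of "Suc j"] by (simp add: g_def mult_ac)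
    finally show ?thesis .
  qed
  have sw: "(\<Sum>y\<in>T. \<Sum>z\<in>T. mu y z * F y z) = (\<Sum>y\<in>T. \<Sum>z\<in>T. mu y z * F z y)" for F
    by (subst sum.swap) (simp add: sym)
  have "(\<Sum>y\<in>T. \<Sum>z\<in>T. mu y z * ((g y - g z) * (h y - h z)))
      = (\<Sum>y\<in>T. \<Sum>z\<in>T. mu y z * (g y * h y)) - (\<Sum>y\<in>T. \<Sum>z\<in>T. mu y z * (g y * h z))
        - (\<Sum>y\<in>T. \<Sum>z\<in>T. mu y z * (g z * h y)) + (\<Sum>y\<in>T. \<Sum>z\<in>T. mu y z * (g z * h z))"
    by (simp add: sum_subtractf[symmetric] sum.distrib[symmetric] algebra_simps)
  also have "(\<Sum>y\<in>T. \<Sum>z\<in>T. mu y z * (g z * h y)) = (\<Sum>y\<in>T. \<Sum>z\<in>T. mu y z * (g y * h z))"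
    by (rule sw)
  also have "(\<Sum>y\<in>T. \<Sum>z\<in>T. mu y z * (g z * h z)) = (\<Sum>y\<in>T. \<Sum>z\<in>T. mu y z * (g y * h y))"
    by (rule sw)
  finally show ?thesis using TA TB by (simp add: g_def h_def)
qed

definition hM :: "'a \<Rightarrow> nat \<Rightarrow> real \<Rightarrow> 'a \<Rightarrow> real" where
  "hM x M s y = (\<Sum>i<M. wp s i * gg x i y)"

lemma D_h:
  assumes T: "finite T" "K M x \<subseteq> T" "\<And>y. y \<in> K M x \<Longrightarrow> nbrs mu y \<subseteq> T"
  shows "Dform T (hM x M s) = (\<Sum>i<M. \<Sum>j<M. wp s i * wp s j * (aa x (i + j) - aa x (Suc (i + j))))"
proof -
  have "(\<Sum>y\<in>T. \<Sum>z\<in>T. mu y z * (hM x M s y - hM x M s z)^2)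
     = (\<Sum>y\<in>T. \<Sum>z\<in>T. \<Sum>i<M. \<Sum>j<M. wp s i * wp s j *
          (mu y z * ((gg x i y - gg x i z) * (gg x j y - gg x j z))))"
  proof (intro sum.cong refl)
    fix y z
    have "hM x M s y - hM x M s z = (\<Sum>i<M. wp s i * (gg x i y - gg x i z))"
      by (simp add: hM_def sum_subtractf[symmetric] algebra_simps)
    then show "mu y z * (hM x M s y - hM x M s z)^2 = (\<Sum>i<M. \<Sum>j<M. wp s i * wp s j *
          (mu y z * ((gg x i y - gg x i z) * (gg x j y - gg x j z))))"
      by (simp add: sq_expand sum_distrib_left mult_ac)
  qed
  also have "\<dots> = (\<Sum>y\<in>T. \<Sum>i<M. \<Sum>j<M. \<Sum>z\<in>T. wp s i * wp s j *
          (mu y z * ((gg x i y - gg x i z) * (gg x j y - gg x j z))))"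
    by (intro sum.cong refl swap3)
  also have "\<dots> = (\<Sum>i<M. \<Sum>j<M. \<Sum>y\<in>T. \<Sum>z\<in>T. wp s i * wp s j *
          (mu y z * ((gg x i y - gg x i z) * (gg x j y - gg x j z))))"
    by (rule swap3)
  also have "\<dots> = (\<Sum>i<M. \<Sum>j<M. wp s i * wp s j * (2 * (aa x (i + j) - aa x (Suc (i + j)))))"
  proof (intro sum.cong refl)
    fix i j assume "i \<in> {..<M}"
    then have "i \<le> M" by simp
    then show "(\<Sum>y\<in>T. \<Sum>z\<in>T. wp s i * wp s j *
          (mu y z * ((gg x i y - gg x i z) * (gg x j y - gg x j z))))
          = wp s i * wp s j * (2 * (aa x (i + j) - aa x (Suc (i + j))))"
      using Dbil[OF T \<open>i \<le> M\<close>, of j] by (simp add: sum_distrib_left[symmetric])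
  qed
  finally have X: "(\<Sum>y\<in>T. \<Sum>z\<in>T. mu y z * (hM x M s y - hM x M s z)^2) =
     (\<Sum>i<M. \<Sum>j<M. wp s i * wp s j * (2 * (aa x (i + j) - aa x (Suc (i + j)))))" .
  show ?thesis unfolding Dform_def X sum_divide_distrib by (intro sum.cong refl) simp
qed

definition kM :: "'a \<Rightarrow> nat \<Rightarrow> real \<Rightarrow> 'a \<Rightarrow> real" where
  "kM x M s y = (\<Sum>i<M. wp s i * (gg x i y - gg x (Suc i) y))"

lemma N_k:
  assumes U: "finite U" "K M x \<subseteq> U"
  shows "(\<Sum>y\<in>U. m y * (kM x M s y)^2) = (\<Sum>i<M. \<Sum>j<M. wp s i * wp s j *
     ((aa x (i + j) - aa x (Suc (i + j))) - (aa x (Suc (i + j)) - aa x (Suc (Suc (i + j))))))"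
proof -
  have "(\<Sum>y\<in>U. m y * (kM x M s y)^2) = (\<Sum>y\<in>U. \<Sum>i<M. \<Sum>j<M. wp s i * wp s j *
     (m y * ((gg x i y - gg x (Suc i) y) * (gg x j y - gg x (Suc j) y))))"
    by (intro sum.cong refl) (simp add: kM_def sq_expand sum_distrib_left mult_ac)
  also have "\<dots> = (\<Sum>i<M. \<Sum>j<M. \<Sum>y\<in>U. wp s i * wp s j *
     (m y * ((gg x i y - gg x (Suc i) y) * (gg x j y - gg x (Suc j) y))))"
    by (rule swap3)
  also have "\<dots> = (\<Sum>i<M. \<Sum>j<M. wp s i * wp s j *
     ((aa x (i + j) - aa x (Suc (i + j))) - (aa x (Suc (i + j)) - aa x (Suc (Suc (i + j))))))"
  proof (intro sum.cong refl)
    fix i j assume "i \<in> {..<M}"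
    then have "K i x \<subseteq> U" "K (Suc i) x \<subseteq> U" using K_mono[of i M x] K_mono[of "Suc i" M x] U by auto
    note I1 = inner[OF U(1) this(1)] and I2 = inner[OF U(1) this(2)]
    have "(\<Sum>y\<in>U. m y * ((gg x i y - gg x (Suc i) y) * (gg x j y - gg x (Suc j) y)))
       = (\<Sum>y\<in>U. m y * (gg x i y * gg x j y)) - (\<Sum>y\<in>U. m y * (gg x i y * gg x (Suc j) y))
         - (\<Sum>y\<in>U. m y * (gg x (Suc i) y * gg x j y)) + (\<Sum>y\<in>U. m y * (gg x (Suc i) y * gg x (Suc j) y))"
      by (simp add: sum_subtractf[symmetric] sum.distrib[symmetric] algebra_simps)
    also have "\<dots> = (aa x (i + j) - aa x (Suc (i + j))) - (aa x (Suc (i + j)) - aa x (Suc (Suc (i + j))))"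
      by (simp add: I1 I2)
    finally show "(\<Sum>y\<in>U. wp s i * wp s j *
     (m y * ((gg x i y - gg x (Suc i) y) * (gg x j y - gg x (Suc j) y)))) = wp s i * wp s j *
     ((aa x (i + j) - aa x (Suc (i + j))) - (aa x (Suc (i + j)) - aa x (Suc (Suc (i + j)))))"
      by (simp add: sum_distrib_left[symmetric])
  qed
  finally show ?thesis .
qed

lemma c_pos:
  assumes "u > 0"
  shows "Ser (\<lambda>n. (aa x n - aa x (Suc n)) - (aa x (Suc n) - aa x (Suc (Suc n)))) u \<ge> 0"
proof -
  define c where "c = (\<lambda>n. (aa x n - aa x (Suc n)) - (aa x (Suc n) - aa x (Suc (Suc n))))"
  have Bc: "\<bar>c n\<bar> \<le> 4" for n using aa_bd[of x n] aa_bd[of x "Suc n"] aa_bd[of x "Suc (Suc n)"]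
    unfolding c_def by linarith
  have u2: "u = 2 * (u / 2)" by simp
  have lim: "(\<lambda>M. \<Sum>i<M. \<Sum>j<M. wp (u/2) i * wp (u/2) j * c (i+j)) \<longlonglongrightarrow> Ser c u"
    using sq_limit[OF Bc, of "u/2"] assms by simp
  have "(\<Sum>i<M. \<Sum>j<M. wp (u/2) i * wp (u/2) j * c (i+j)) \<ge> 0" for M
  proof -
    have "(\<Sum>i<M. \<Sum>j<M. wp (u/2) i * wp (u/2) j * c (i+j)) = (\<Sum>y\<in>K M x. m y * (kM x M (u/2) y)^2)"
      by (subst N_k) (auto simp: K_fin c_def)
    also have "\<dots> \<ge> 0" by (intro sum_nonneg mult_nonneg_nonneg) (auto simp: m_pos less_imp_le)
    finally show ?thesis .
  qed
  then have "0 \<le> Ser c u" by (intro LIMSEQ_le_const[OF lim]) auto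
  then show ?thesis by (simp add: c_def)
qed

lemma a_pos: "u \<ge> 0 \<Longrightarrow> Ser (aa x) u \<ge> 0"
  unfolding Ser_def by (intro suminf_nonneg summable_wp[OF aa_bd] mult_nonneg_nonneg wp_nonneg aa_nonneg)

lemma E_bound:
  assumes "s > 0"
  shows "s * Ser (\<lambda>n. aa x n - aa x (Suc n)) (2 * s) \<le> Ser (aa x) s"
  by (rule key_ineq[OF aa_bd c_pos a_pos assms])

end

context WG
begin

lemma adj_K: "(x, y) \<in> adj mu ^^ n \<Longrightarrow> y \<in> K n x"
proof (induction n arbitrary: x)
  case 0 then show ?case by simp
next
  case (Suc n)
  then obtain z where "(x, z) \<in> adj mu" "(z, y) \<in> adj mu ^^ n" by (meson relpow_Suc_D2)
  then have "z \<in> nbrs mu x" "y \<in> K n z" using Suc.IH by (auto simp: nbrs_iff)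
  then show ?case by auto
qed

lemma gdist_rel: "(x, y) \<in> adj mu ^^ gdist mu x y"
proof -
  obtain n where "(x, y) \<in> adj mu ^^ n" using conn[of x y] rtrancl_power by blast
  then show ?thesis unfolding gdist_def by (rule LeastI)
qed

lemma gdist_le: "(x, y) \<in> adj mu ^^ n \<Longrightarrow> gdist mu x y \<le> n"
  unfolding gdist_def by (rule Least_le)

lemma shortcut:
  assumes p0: "p 0 = x" and pk: "p k = y" and pe: "\<forall>l<k. (p l, p (Suc l)) \<in> adj mu"
    and ij: "i < j" "j \<le> k" and eq: "p i = p j"
  shows "(x, y) \<in> adj mu ^^ (k - (j - i))"
proof -
  define d where "d = j - i"
  define q where "q l = (if l \<le> i then p l else p (l + d))" for l
  have "q 0 = x" by (simp add: q_def p0)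
  moreover have "q (k - d) = y"
  proof (cases "k - d \<le> i")
    case True
    then have "k - d = i" "j = k" using ij by (auto simp: d_def)
    then show ?thesis using True eq pk by (simp add: q_def)
  next
    case False
    then show ?thesis using ij pk by (simp add: q_def d_def)
  qed
  moreover have "\<forall>l<k - d. (q l, q (Suc l)) \<in> adj mu"
  proof (intro allI impI)
    fix l assume l: "l < k - d"
    show "(q l, q (Suc l)) \<in> adj mu"
    proof (cases "l < i")
      case True then show ?thesis using pe ij by (simp add: q_def)
    next
      case False
      show ?thesis
      proof (cases "l = i")
        case True
        then have "q l = p j" "q (Suc l) = p (Suc j)" using eq ij by (auto simp: q_def d_def)
        moreover have "j < k" using l True ij by (simp add: d_def)
        ultimately show ?thesis using pe by simp
      next
        case False
        then have "q l = p (l + d)" "q (Suc l) = p (Suc (l + d))" using \<open>\<not> l < i\<close> by (auto simp: q_def)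
        moreover have "l + d < k" using l by simp
        ultimately show ?thesis using pe by simp
      qed
    qed
  qed
  ultimately show ?thesis unfolding d_def by (auto simp: relpow_fun_conv)
qed

lemma shortest_path:
  "\<exists>p. p 0 = x \<and> p (gdist mu x y) = y \<and> (\<forall>i<gdist mu x y. (p i, p (Suc i)) \<in> adj mu)
       \<and> inj_on p {..gdist mu x y}"
proof -
  define k where "k = gdist mu x y"
  obtain p where p: "p 0 = x" "p k = y" "\<forall>i<k. (p i, p (Suc i)) \<in> adj mu"
    using gdist_rel[of x y] unfolding k_def relpow_fun_conv by blast
  have "inj_on p {..k}"
  proof (rule inj_onI, rule ccontr)
    fix i j assume ij: "i \<in> {..k}" "j \<in> {..k}" "p i = p j" "i \<noteq> j"
    have "\<exists>i j. i < j \<and> j \<le> k \<and> p i = p j"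
    proof (cases "i < j")
      case True then show ?thesis using ij by auto
    next
      case False then show ?thesis using ij by (intro exI[of _ j] exI[of _ i]) auto
    qed
    then obtain i j where "i < j" "j \<le> k" "p i = p j" by blast
    from shortcut[OF p this] have "k \<le> k - (j - i)" unfolding k_def by (rule gdist_le)
    then show False using \<open>i < j\<close> \<open>j \<le> k\<close> by linarith
  qed
  then show ?thesis using p unfolding k_def by blast
qed

lemma path_bound:
  assumes T: "finite T" and p0: "p 0 = x" and pk: "p k = y"
    and pe: "\<forall>i<k. (p i, p (Suc i)) \<in> adj mu" and inj: "inj_on p {..k}"
    and pT: "p ` {..k} \<subseteq> T"
  shows "(f x - f y)^2 \<le> real k * Dform T f"
proof -
  define F where "F = (\<lambda>(y, z). mu y z * (f y - f z)^2)"
  define e1 where "e1 = (\<lambda>i. (p i, p (Suc i)))"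
  define e2 where "e2 = (\<lambda>i. (p (Suc i), p i))"
  define D where "D i = f (p i) - f (p (Suc i))" for i
  have Fnn: "F z \<ge> 0" for z by (cases z) (auto simp: F_def nonneg)
  have i1: "inj_on e1 {..<k}"
    by (rule inj_onI) (use inj in \<open>auto simp: e1_def inj_on_def\<close>)
  have i2: "inj_on e2 {..<k}"
    by (rule inj_onI) (use inj in \<open>auto simp: e2_def inj_on_def\<close>)
  have disj: "e1 ` {..<k} \<inter> e2 ` {..<k} = {}"
  proof (rule ccontr)
    assume "e1 ` {..<k} \<inter> e2 ` {..<k} \<noteq> {}"
    then obtain i j where ij: "i < k" "j < k" "p i = p (Suc j)" "p (Suc i) = p j"
      by (auto simp: e1_def e2_def)
    have "i = Suc j" using inj ij by (auto simp: inj_on_def)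
    moreover have "Suc i = j" using inj ij by (auto simp: inj_on_def)
    ultimately show False by simp
  qed
  have sub: "e1 ` {..<k} \<union> e2 ` {..<k} \<subseteq> T \<times> T"
    using pT by (auto simp: e1_def e2_def)
  have S1: "sum F (e1 ` {..<k}) \<ge> (\<Sum>i<k. (D i)^2)"
  proof -
    have "sum F (e1 ` {..<k}) = (\<Sum>i<k. mu (p i) (p (Suc i)) * (D i)^2)"
      unfolding sum.reindex[OF i1] by (simp add: F_def e1_def D_def)
    also have "\<dots> \<ge> (\<Sum>i<k. (D i)^2)"
    proof (rule sum_mono)
      fix i assume "i \<in> {..<k}"
      then have "mu (p i) (p (Suc i)) \<ge> 1" using pe ge1 by auto
      then show "(D i)^2 \<le> mu (p i) (p (Suc i)) * (D i)^2"
        using mult_right_mono[of 1 "mu (p i) (p (Suc i))" "(D i)^2"] by simp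
    qed
    finally show ?thesis .
  qed
  have S2: "sum F (e2 ` {..<k}) = sum F (e1 ` {..<k})"
    unfolding sum.reindex[OF i1] sum.reindex[OF i2] by (simp add: F_def e1_def e2_def sym power2_commute)
  have "(\<Sum>y\<in>T. \<Sum>z\<in>T. mu y z * (f y - f z)^2) = sum F (T \<times> T)"
    by (simp add: F_def sum.cartesian_product)
  also have "\<dots> \<ge> sum F (e1 ` {..<k} \<union> e2 ` {..<k})"
    by (rule sum_mono2) (use T sub Fnn in auto)
  finally have "2 * Dform T f \<ge> sum F (e1 ` {..<k}) + sum F (e2 ` {..<k})"
    by (simp add: Dform_def sum.union_disjoint[OF _ _ disj])
  then have DD: "Dform T f \<ge> (\<Sum>i<k. (D i)^2)" using S1 S2 by linarith
  have "f x - f y = (\<Sum>i<k. D i)"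
    unfolding D_def using sum_lessThan_telescope'[of "\<lambda>i. f (p i)" k] p0 pk by simp
  then have "(f x - f y)^2 \<le> (\<Sum>i<k. (D i)^2) * card {..<k}"
    using sum_squared_le_sum_of_squares[of D "{..<k}"] by simp
  also have "\<dots> \<le> Dform T f * real k"
    using DD by (simp add: mult_right_mono)
  finally show ?thesis by (simp add: mult_ac)
qed

end

context WG
begin

lemma F_eq: "trans_prob mu s x y / m y = (\<Sum>n. wp s n * gg x n y)"
proof -
  have sm: "summable (\<lambda>n. wp s n * pstep mu n x y)"
    by (rule summable_wp[where B=1]) (use pstep_nonneg pstep_le1 in auto)
  show ?thesis
    unfolding trans_prob_def gg_def using suminf_divide[OF sm, of "m y"]
    by (simp add: wp_def)
qed

lemma ball_fin: "ball_g mu x r \<subseteq> K (nat \<lfloor>r\<rfloor>) x"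
proof
  fix y assume "y \<in> ball_g mu x r"
  then have "real (gdist mu x y) \<le> r" by (simp add: ball_g_def)
  then have "gdist mu x y \<le> nat \<lfloor>r\<rfloor>" by linarith
  then show "y \<in> K (nat \<lfloor>r\<rfloor>) x" using adj_K[OF gdist_rel[of x y]] K_mono by blast
qed

lemma mass_le1:
  assumes "finite B" and s0: "s \<ge> 0"
  shows "(\<Sum>y\<in>B. trans_prob mu s x y) \<le> 1"
proof -
  have sm: "summable (\<lambda>n. wp s n * pstep mu n x y)" for y
    by (rule summable_wp[where B=1]) (use pstep_nonneg pstep_le1 in auto)
  have "(\<Sum>y\<in>B. trans_prob mu s x y) = (\<Sum>n. \<Sum>y\<in>B. wp s n * pstep mu n x y)"
    unfolding trans_prob_def by (subst suminf_sum[OF sm]) (simp add: wp_def)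
  also have "\<dots> \<le> (\<Sum>n. wp s n)"
  proof (rule suminf_le)
    fix n
    have "(\<Sum>y\<in>B. pstep mu n x y) \<le> (\<Sum>y\<in>B \<union> K n x. pstep mu n x y)"
      by (rule sum_mono2) (auto simp: assms K_fin pstep_nonneg)
    also have "\<dots> = 1" by (rule sum_pstep) (auto simp: assms K_fin)
    finally have "(\<Sum>y\<in>B. pstep mu n x y) \<le> 1" .
    then have "wp s n * (\<Sum>y\<in>B. pstep mu n x y) \<le> wp s n * 1"
      by (intro mult_left_mono wp_nonneg s0) auto
    then show "(\<Sum>y\<in>B. wp s n * pstep mu n x y) \<le> wp s n"
      by (simp add: sum_distrib_left)
  next
    show "summable (\<lambda>n. \<Sum>y\<in>B. wp s n * pstep mu n x y)"
      by (intro summable_sum sm)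
    show "summable (wp s)" using wp_sums by (rule sums_summable)
  qed
  also have "\<dots> = 1" using wp_sums sums_unique by metis
  finally show ?thesis .
qed

lemma diff_bound:
  assumes s: "s > 0"
  shows "(Ser (aa x) s - trans_prob mu s x y / m y)^2
          \<le> real (gdist mu x y) * (Ser (aa x) s / s)"
proof -
  define k where "k = gdist mu x y"
  obtain p where p: "p 0 = x" "p k = y" "\<forall>i<k. (p i, p (Suc i)) \<in> adj mu" "inj_on p {..k}"
    using shortest_path[of x y] unfolding k_def by blast
  define b where "b n = aa x n - aa x (Suc n)" for n
  have Bb: "\<bar>b n\<bar> \<le> 2" for n using aa_bd[of x n] aa_bd[of x "Suc n"] unfolding b_def by linarith
  define T where "T M = K M x \<union> (\<Union>z\<in>K M x. nbrs mu z) \<union> p ` {..k}" for M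
  have ineq: "(hM x M s x - hM x M s y)^2 \<le> real k * (\<Sum>i<M. \<Sum>j<M. wp s i * wp s j * b (i + j))" for M
  proof -
    have fT: "finite (T M)" by (simp add: T_def K_fin fin_nbrs)
    have "(hM x M s x - hM x M s y)^2 \<le> real k * Dform (T M) (hM x M s)"
      by (rule path_bound[OF fT p]) (auto simp: T_def)
    also have "Dform (T M) (hM x M s) = (\<Sum>i<M. \<Sum>j<M. wp s i * wp s j * b (i + j))"
      unfolding b_def by (rule D_h) (auto simp: T_def K_fin fin_nbrs)
    finally show ?thesis .
  qed
  have gx: "summable (\<lambda>n. wp s n * gg x n z)" for z
    by (rule summable_wp[where B=1]) (rule gg_bd)
  have l1: "(\<lambda>M. hM x M s z) \<longlonglongrightarrow> (\<Sum>n. wp s n * gg x n z)" for z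
    unfolding hM_def by (rule summable_LIMSEQ[OF gx])
  have hx: "(\<Sum>n. wp s n * gg x n x) = Ser (aa x) s" by (simp add: Ser_def gg_x)
  have lL: "(\<lambda>M. (hM x M s x - hM x M s y)^2) \<longlonglongrightarrow> (Ser (aa x) s - trans_prob mu s x y / m y)^2"
    unfolding F_eq hx[symmetric] by (intro tendsto_intros l1)
  have lR: "(\<lambda>M. real k * (\<Sum>i<M. \<Sum>j<M. wp s i * wp s j * b (i + j))) \<longlonglongrightarrow> real k * Ser b (2 * s)"
    by (intro tendsto_intros sq_limit[OF Bb]) (use s in simp)
  have "(Ser (aa x) s - trans_prob mu s x y / m y)^2 \<le> real k * Ser b (2 * s)"
    by (rule LIMSEQ_le[OF lL lR]) (use ineq in auto)
  also have "\<dots> \<le> real k * (Ser (aa x) s / s)"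
  proof (rule mult_left_mono)
    show "Ser b (2 * s) \<le> Ser (aa x) s / s"
      using E_bound[OF s, of x] s unfolding b_def[abs_def] by (simp add: field_simps mult.commute)
  qed simp
  finally show ?thesis unfolding k_def .
qed

lemma final_alg:
  fixes q V e r A :: real
  assumes r: "r > 0" and A: "A > 0" and q: "q \<ge> 0" and V: "V \<ge> r^2 / A"
    and e: "e = sqrt (q / (2 * r^2))" and main: "V * q \<le> 1 + V * e"
  shows "q \<le> 2 * max A 1 / r^2"
proof -
  have r2: "r^2 > 0" using r by simp
  have Vp: "V > 0" using V r2 A by (smt (verit) divide_pos_pos)
  have "q \<le> 1 / V + e" using main Vp by (simp add: field_simps)
  also have "1 / V \<le> A / r^2"
    using V Vp A r2 by (simp add: field_simps)
  finally have q1: "q \<le> A / r^2 + e" by simp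
  define v where "v = e * r^2"
  have e0: "e \<ge> 0" using e q r2 by simp
  have v0: "v \<ge> 0" using e0 r2 by (simp add: v_def)
  have esq: "e^2 = q / (2 * r^2)" using e q r2 by simp
  have q2: "q = 2 * r^2 * e^2" using esq r2 by (simp add: field_simps)
  have qv: "q * r^2 = 2 * v^2"
    unfolding q2 v_def by (simp add: power_mult_distrib power2_eq_square)
  have "q * r^2 \<le> (A / r^2 + e) * r^2" using q1 r2 by (simp add: mult_right_mono)
  then have ineq: "2 * v^2 \<le> A + v" using r2 by (simp add: qv v_def field_simps)
  have "v^2 \<le> max A 1"
  proof (rule ccontr)
    assume "\<not> v^2 \<le> max A 1"
    then have h: "v^2 > max A 1" by linarith
    then have "v^2 > 1" by linarith
    then have "v > 1" using v0 by (smt (verit) power_le_one)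
    then have "v * (v - 1) > 0" by simp
    then show False using h ineq by (simp add: algebra_simps power2_eq_square max_def split: if_splits)
  qed
  then have "q * r^2 \<le> 2 * max A 1" using qv by simp
  then show ?thesis using r2 by (simp add: field_simps)
qed

lemma main:
  assumes r: "r > 0" and A: "A > 0" and V: "vol mu x r \<ge> r^2 / A" and t: "t = r^3"
  shows "heat_kernel mu (2 * t) x x \<le> 2 * max A 1 / r^2"
proof -
  define s where "s = 2 * t"
  have s0: "s > 0" using r t by (simp add: s_def)
  define q where "q = Ser (aa x) s"
  have q0: "q \<ge> 0" unfolding q_def using a_pos s0 by simp
  have hk: "heat_kernel mu s x x = q"
    unfolding heat_kernel_def F_eq q_def by (simp add: Ser_def gg_x)
  define B where "B = ball_g mu x r"
  have fB: "finite B" unfolding B_def using ball_fin K_fin finite_subset by blast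
  define e where "e = sqrt (r * (q / s))"
  have pt: "q \<le> trans_prob mu s x y / m y + e" if "y \<in> B" for y
  proof -
    have "real (gdist mu x y) \<le> r" using that by (simp add: B_def ball_g_def)
    have "(q - trans_prob mu s x y / m y)^2 \<le> real (gdist mu x y) * (q / s)"
      using diff_bound[OF s0, of x y] by (simp add: q_def)
    also have "\<dots> \<le> r * (q / s)"
      by (rule mult_right_mono) (use \<open>real (gdist mu x y) \<le> r\<close> q0 s0 in auto)
    finally have "sqrt ((q - trans_prob mu s x y / m y)^2) \<le> e"
      unfolding e_def by (rule real_sqrt_le_mono)
    then show ?thesis by simp
  qed
  have "vol mu x r * q = (\<Sum>y\<in>B. m y * q)"
    by (simp add: vol_def B_def sum_distrib_right)
  also have "\<dots> \<le> (\<Sum>y\<in>B. m y * (trans_prob mu s x y / m y + e))"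
    by (rule sum_mono) (use pt m_pos in \<open>auto intro: mult_left_mono less_imp_le\<close>)
  also have "\<dots> = (\<Sum>y\<in>B. trans_prob mu s x y) + vol mu x r * e"
  proof -
    have "m y * (trans_prob mu s x y / m y + e) = trans_prob mu s x y + m y * e" for y
      using m_pos[of y] by (simp add: field_simps)
    then show ?thesis by (simp add: sum.distrib vol_def B_def sum_distrib_right)
  qed
  also have "\<dots> \<le> 1 + vol mu x r * e" using mass_le1[OF fB, of s x] s0 by simp
  finally have mainineq: "vol mu x r * q \<le> 1 + vol mu x r * e" .
  have e': "e = sqrt (q / (2 * r^2))"
    unfolding e_def s_def t using r by (simp add: power3_eq_cube power2_eq_square field_simps)
  have "q \<le> 2 * max A 1 / r^2" by (rule final_alg[OF r A q0 V e' mainineq])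
  then show ?thesis using hk by (simp add: s_def)
qed

end

theorem corollary4p2:
  fixes \<mu> :: "'a \<Rightarrow> 'a \<Rightarrow> real" and x :: 'a and r A t :: real
  assumes "weighted_graph \<mu>"
    and "\<And>y z. (y, z) \<in> adj \<mu> \<Longrightarrow> \<mu> y z \<ge> 1"
    and "r > 0" and "A > 0"
    and "vol \<mu> x r \<ge> r ^ 2 / A"
    and "t = r ^ 3"
  shows "heat_kernel \<mu> (2 * t) x x \<le> 2 * max A 1 / r ^ 2
       \<and> 2 * max A 1 / r ^ 2 = 2 * max A 1 / t powr (2 / 3)"
proof -
  interpret WG \<mu> using assms(1,2) by unfold_locales
  have h1: "heat_kernel \<mu> (2 * t) x x \<le> 2 * max A 1 / r ^ 2"
    by (rule main[OF assms(3-6)])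
  have "t powr (2 / 3) = (r powr 3) powr (2 / 3)"
    using assms(3,6) powr_realpow[of r 3] by simp
  also have "\<dots> = r powr 2" by (simp add: powr_powr)
  also have "\<dots> = r ^ 2" using assms(3) powr_realpow[of r 2] by simp
  finally have h2: "t powr (2 / 3) = r ^ 2" .
  show ?thesis using h1 h2 by simp
qed

end
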